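(* Let $n\ge 3$ be an integer. If $G$ is a graph on $2n$ vertices with at least $n^2-1$ edges such that $G$ does not contain two distinct vertices of the same degree joined by a path of length three, then $G$ is isomorphic to the complete bipartite graph $K_{n-1,n+1}$. (Equivalently, $K_{n-1,n+1}$ is the unique such graph.)
   Context: A path of length three joining vertices $a$ and $b$ is a path $a\,x\,y\,b$ with four distinct vertices and three edges $ax,xy,yb$. Graphs are finite and simple. *)

theory Defs
  imports Main
begin

definition simple_graph :: "'a set \<Rightarrow> 'a set set \<Rightarrow> bool" where
  "simple_graph V E \<longleftrightarrow> finite V \<and> (\<forall>e\<in>E. e \<subseteq> V \<and> card e = 2)"

definition degree :: "'a set set \<Rightarrow> 'a \<Rightarrow> nat" where
  "degree E v = card {e\<in>E. v \<in> e}"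

definition path3 :: "'a set set \<Rightarrow> 'a \<Rightarrow> 'a \<Rightarrow> bool" where
  "path3 E a b \<longleftrightarrow> (\<exists>x y. distinct [a, x, y, b] \<and>
      {a, x} \<in> E \<and> {x, y} \<in> E \<and> {y, b} \<in> E)"

definition Kbip_verts :: "nat \<Rightarrow> nat \<Rightarrow> nat set" where
  "Kbip_verts p q = {0..<p+q}"

definition Kbip_edges :: "nat \<Rightarrow> nat \<Rightarrow> nat set set" where
  "Kbip_edges p q = {{i, j} | i j. i < p \<and> p \<le> j \<and> j < p + q}"

definition graph_iso :: "'a set \<Rightarrow> 'a set set \<Rightarrow> 'b set \<Rightarrow> 'b set set \<Rightarrow> bool" where
  "graph_iso V E V' E' \<longleftrightarrow> (\<exists>f. bij_betw f V V' \<and>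
      (\<forall>u\<in>V. \<forall>v\<in>V. {u, v} \<in> E \<longleftrightarrow> {f u, f v} \<in> E'))"

end

theory Submission
  imports Defs
begin

locale pg =
  fixes V :: "'a set" and E :: "'a set set" and n :: nat
  assumes sg: "simple_graph V E"
    and cardV: "card V = 2*n"
    and n3: "n \<ge> 3"
    and cardE: "card E \<ge> n^2 - 1"
    and noP: "\<forall>a\<in>V. \<forall>b\<in>V. a \<noteq> b \<and> degree E a = degree E b \<longrightarrow> \<not> path3 E a b"
begin

definition nb :: "'a \<Rightarrow> 'a set" where "nb v = {u\<in>V. {u,v} \<in> E}"

abbreviation dg :: "'a \<Rightarrow> nat" where "dg v \<equiv> degree E v"

lemma finV: "finite V" using sg unfolding simple_graph_def by auto

lemma EsubV: "e \<in> E \<Longrightarrow> e \<subseteq> V" using sg unfolding simple_graph_def by auto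
lemma Ecard: "e \<in> E \<Longrightarrow> card e = 2" using sg unfolding simple_graph_def by auto

lemma finE: "finite E"
proof -
  have "E \<subseteq> Pow V" using EsubV by auto
  thus ?thesis using finV finite_subset by blast
qed

lemma edge: assumes "{u,v} \<in> E" shows "u \<in> V" "v \<in> V" "u \<noteq> v"
proof -
  show "u \<in> V" "v \<in> V" using EsubV[OF assms] by auto
  show "u \<noteq> v" using Ecard[OF assms] by (cases "u = v") auto
qed

lemma ecomm: "{u,v} \<in> E \<longleftrightarrow> {v,u} \<in> E" by (simp add: insert_commute)

lemma nb_sub: "nb v \<subseteq> V" unfolding nb_def by auto
lemma fin_nb: "finite (nb v)" using nb_sub finV finite_subset by blast
lemma nb_irr: "v \<notin> nb v" unfolding nb_def using edge(3) by blast
lemma nb_iff: "u \<in> nb v \<longleftrightarrow> {u,v} \<in> E" unfolding nb_def using edge(1) by blast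
lemma nb_sym: "u \<in> nb v \<longleftrightarrow> v \<in> nb u" using nb_iff ecomm by blast

lemma deg_nb: assumes "v \<in> V" shows "dg v = card (nb v)"
proof -
  have "bij_betw (\<lambda>u. {u,v}) (nb v) {e\<in>E. v \<in> e}"
  proof (rule bij_betwI')
    fix x y assume "x \<in> nb v" "y \<in> nb v"
    hence "x \<noteq> v" "y \<noteq> v" using nb_irr by auto
    thus "({x, v} = {y, v}) = (x = y)" by (auto simp: doubleton_eq_iff)
  next
    fix x assume "x \<in> nb v" thus "{x, v} \<in> {e \<in> E. v \<in> e}" using nb_iff by auto
  next
    fix e assume "e \<in> {e \<in> E. v \<in> e}"
    hence eE: "e \<in> E" and ve: "v \<in> e" by auto
    obtain a b where ab: "e = {a,b}" "a \<noteq> b" using Ecard[OF eE] card_2_iff by metis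
    show "\<exists>x\<in>nb v. e = {x, v}"
    proof (cases "v = a")
      case True thus ?thesis using ab eE nb_iff by (intro bexI[of _ b]) (auto simp: insert_commute)
    next
      case False hence "v = b" using ve ab by auto
      thus ?thesis using ab eE nb_iff by (intro bexI[of _ a]) auto
    qed
  qed
  thus ?thesis unfolding degree_def using bij_betw_same_card by metis
qed

lemma handshake: "(\<Sum>v\<in>V. dg v) = 2 * card E"
proof -
  have "(\<Sum>v\<in>V. dg v) = (\<Sum>v\<in>V. \<Sum>e\<in>E. if v \<in> e then 1 else 0)"
    unfolding degree_def by (simp add: sum.If_cases finE Int_def)
  also have "\<dots> = (\<Sum>e\<in>E. \<Sum>v\<in>V. if v \<in> e then 1 else 0)" by (rule sum.swap)
  also have "\<dots> = (\<Sum>e\<in>E. card e)"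
  proof (rule sum.cong)
    fix e assume "e \<in> E"
    hence "V \<inter> e = e" using EsubV by auto
    thus "(\<Sum>v\<in>V. if v \<in> e then 1 else 0) = card e"
      by (simp add: sum.If_cases finV)
  qed simp
  also have "\<dots> = (\<Sum>e\<in>E. 2)" using Ecard by simp
  finally show ?thesis by simp
qed

lemma no_p3:
  assumes "{a,p} \<in> E" "{p,q} \<in> E" "{q,b} \<in> E" "a \<noteq> q" "p \<noteq> b" "a \<noteq> b" "dg a = dg b"
  shows False
proof -
  have "a \<in> V" "b \<in> V" "a \<noteq> p" "p \<noteq> q" "q \<noteq> b" using edge assms by blast+
  hence "path3 E a b" unfolding path3_def using assms by (intro exI[of _ p] exI[of _ q]) auto
  thus False using noP \<open>a \<in> V\<close> \<open>b \<in> V\<close> assms by blast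
qed

lemma nbE: "u \<in> nb v \<Longrightarrow> {u,v} \<in> E" using nb_iff by blast
lemma nbE': "u \<in> nb v \<Longrightarrow> {v,u} \<in> E" using nb_iff ecomm by blast
lemma nbV: "u \<in> nb v \<Longrightarrow> u \<in> V" using nb_sub by blast

lemma p2_int:
  assumes "u \<in> V" "v \<in> V" "u \<noteq> v" "dg u = dg v" "p \<in> nb u" "p \<noteq> v"
  shows "nb p \<inter> nb v \<subseteq> {u}"
proof
  fix w assume w: "w \<in> nb p \<inter> nb v"
  show "w \<in> {u}"
  proof (rule ccontr)
    assume "w \<notin> {u}"
    hence "u \<noteq> w" by auto
    moreover have "{u,p} \<in> E" using assms(5) nbE' by blast
    moreover have "{p,w} \<in> E" using w nbE' by blast
    moreover have "{w,v} \<in> E" using w nbE by blast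
    ultimately show False using no_p3 assms by blast
  qed
qed

lemma p2w:
  assumes "u \<in> V" "v \<in> V" "u \<noteq> v" "dg u = dg v" "p \<in> nb u" "p \<noteq> v"
  shows "dg p + dg v \<le> card V + 1"
proof -
  have pV: "p \<in> V" using assms(5) nbV by blast
  have I: "nb p \<inter> nb v \<subseteq> {u}" using p2_int assms by blast
  have "card (nb p \<inter> nb v) \<le> 1" using card_mono[OF _ I] by simp
  moreover have "card (nb p \<union> nb v) \<le> card V" using card_mono[OF finV] nb_sub by (meson Un_subset_iff)
  moreover have "card (nb p) + card (nb v) = card (nb p \<union> nb v) + card (nb p \<inter> nb v)"
    using card_Un_Int fin_nb by blast
  ultimately show ?thesis using deg_nb pV assms(2) by simp
qed

lemma p2s:
  assumes "u \<in> V" "v \<in> V" "u \<noteq> v" "dg u = dg v" "p \<in> nb u" "p \<noteq> v" "u \<notin> nb v"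
  shows "dg p + dg v \<le> card V"
proof -
  have pV: "p \<in> V" using assms(5) nbV by blast
  have I: "nb p \<inter> nb v = {}" using p2_int[OF assms(1-6)] assms(7) by blast
  have "card (nb p \<union> nb v) \<le> card V" using card_mono[OF finV] nb_sub by (meson Un_subset_iff)
  moreover have "card (nb p) + card (nb v) = card (nb p \<union> nb v) + card (nb p \<inter> nb v)"
    using card_Un_Int fin_nb by blast
  ultimately show ?thesis using deg_nb pV assms(2) I by simp
qed


end

context pg
begin

lemma adj_eq:
  assumes xy: "{x,y} \<in> E" and eq: "dg x = dg y" and big: "2 * dg x \<ge> card V + 2"
  shows False
proof -
  have xV: "x \<in> V" and yV: "y \<in> V" and xy': "x \<noteq> y" using edge xy by auto
  define P where "P = nb x - {y}"
  define Q where "Q = nb y - {x}"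
  define Z where "Z = P \<inter> Q"
  define R where "R = V - (P \<union> Q \<union> {x,y})"
  have finP: "finite P" "finite Q" "finite Z" "finite R"
    using fin_nb finV unfolding P_def Q_def Z_def R_def by auto
  have ynx: "y \<in> nb x" and xny: "x \<in> nb y" using xy nb_iff ecomm by auto
  have cP: "card P = dg x - 1" unfolding P_def using deg_nb[OF xV] ynx fin_nb by simp
  have cQ: "card Q = dg y - 1" unfolding Q_def using deg_nb[OF yV] xny fin_nb by simp
  have PQV: "P \<union> Q \<subseteq> V - {x,y}" unfolding P_def Q_def using nb_sub nb_irr by blast
  have cR: "card R + card (P \<union> Q) + 2 = card V"
  proof -
    have "P \<union> Q \<union> {x,y} \<subseteq> V" using PQV xV yV by blast
    moreover have "finite (P \<union> Q \<union> {x,y})" using finP by simp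
    ultimately have "card R = card V - card (P \<union> Q \<union> {x,y})" unfolding R_def
      by (simp add: card_Diff_subset)
    moreover have "card (P \<union> Q \<union> {x,y}) = card (P \<union> Q) + 2"
    proof -
      have "(P \<union> Q) \<inter> {x,y} = {}" using PQV by blast
      hence "card (P \<union> Q \<union> {x,y}) = card (P \<union> Q) + card {x,y}"
        by (subst card_Un_disjoint) (use finP in auto)
      thus ?thesis using xy' by simp
    qed
    moreover have "card (P \<union> Q \<union> {x,y}) \<le> card V"
      by (rule card_mono[OF finV \<open>P \<union> Q \<union> {x,y} \<subseteq> V\<close>])
    ultimately show ?thesis by linarith
  qed
  have cPQ: "card (P \<union> Q) + card Z = card P + card Q"
    unfolding Z_def using card_Un_Int finP by metis
  have zdeg: "dg z \<in> {2..2 + card R}" if z: "z \<in> Z" for z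
  proof -
    have zV: "z \<in> V" and zP: "z \<in> nb x" "z \<noteq> y" and zQ: "z \<in> nb y" "z \<noteq> x"
      using z nbV unfolding Z_def P_def Q_def by auto
    have sub: "nb z \<subseteq> {x,y} \<union> R"
    proof
      fix w assume w: "w \<in> nb z"
      have wV: "w \<in> V" using w nbV by blast
      have "w \<notin> Q"
      proof
        assume wQ: "w \<in> Q"
        hence "w \<in> nb y" "w \<noteq> x" unfolding Q_def by auto
        moreover have "{x,z} \<in> E" "{z,w} \<in> E" using nbE'[OF zP(1)] nbE'[OF w] by auto
        moreover have "{w,y} \<in> E" using nbE \<open>w \<in> nb y\<close> by blast
        ultimately show False using no_p3[of x z w y] eq xy' zP by blast
      qed
      moreover have "w \<notin> P"
      proof
        assume wP: "w \<in> P"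
        hence "w \<in> nb x" "w \<noteq> y" unfolding P_def by auto
        moreover have "{w,z} \<in> E" "{z,y} \<in> E" using nbE[OF w] nbE[OF zQ(1)] by auto
        moreover have "{x,w} \<in> E" using nbE' \<open>w \<in> nb x\<close> by blast
        ultimately show False using no_p3[of x w z y] eq xy' zQ by blast
      qed
      ultimately show "w \<in> {x,y} \<union> R" using wV unfolding R_def by blast
    qed
    have "{x,y} \<subseteq> nb z" using zP zQ nb_sym by auto
    hence "card {x,y} \<le> card (nb z)" by (rule card_mono[OF fin_nb])
    hence "2 \<le> card (nb z)" using xy' by simp
    moreover have "card (nb z) \<le> 2 + card R"
    proof -
      have "finite ({x,y} \<union> R)" using finP by simp
      hence "card (nb z) \<le> card ({x,y} \<union> R)" using card_mono sub by blast
      also have "\<dots> \<le> card {x,y} + card R" using card_Un_le by blast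
      also have "\<dots> \<le> 2 + card R" by (simp add: card_insert_le_m1)
      finally show ?thesis .
    qed
    ultimately show ?thesis using deg_nb[OF zV] by simp
  qed
  have inj: "inj_on dg Z"
  proof (rule inj_onI)
    fix z1 z2 assume z1: "z1 \<in> Z" and z2: "z2 \<in> Z" and e: "dg z1 = dg z2"
    show "z1 = z2"
    proof (rule ccontr)
      assume ne: "z1 \<noteq> z2"
      have "{z1,x} \<in> E" "z1 \<noteq> y" using z1 nbE unfolding Z_def P_def by auto
      moreover have "{y,z2} \<in> E" "x \<noteq> z2" using z2 nbE' unfolding Z_def Q_def by auto
      ultimately show False using no_p3[of z1 x y z2] xy ne e by blast
    qed
  qed
  have "card Z \<le> card {2..2 + card R}"
    by (rule card_inj_on_le[OF inj _ finite_atLeastAtMost]) (use zdeg in blast)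
  hence "card Z \<le> card R + 1" by simp
  thus False using cR cPQ cP cQ eq big by linarith
qed

end

lemma kbip_mem: "{a,b} \<in> Kbip_edges p q \<longleftrightarrow> (a < p \<and> p \<le> b \<and> b < p + q) \<or> (b < p \<and> p \<le> a \<and> a < p + q)"
  unfolding Kbip_edges_def by (auto simp: doubleton_eq_iff)

lemma iso_bip:
  fixes V :: "'a set" and E :: "'a set set"
  assumes finV: "finite V" and XV: "X \<subseteq> V" and cX: "card X = p" and cY: "card (V - X) = q"
    and ch: "\<forall>u\<in>V. \<forall>v\<in>V. ({u,v} \<in> E \<longleftrightarrow> (u \<in> X \<and> v \<notin> X) \<or> (u \<notin> X \<and> v \<in> X))"
  shows "graph_iso V E (Kbip_verts p q) (Kbip_edges p q)"
proof -
  have finX: "finite X" using finV XV finite_subset by blast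
  obtain g where g: "bij_betw g X {0..<p}" using finite_same_card_bij[OF finX, of "{0..<p}"] cX by auto
  obtain h where h: "bij_betw h (V - X) {p..<p+q}" using finite_same_card_bij[of "V - X" "{p..<p+q}"] finV cY by auto
  define f where "f u = (if u \<in> X then g u else h u)" for u
  have bg: "bij_betw f X {0..<p}" using g by (rule bij_betw_cong[THEN iffD1, rotated]) (simp add: f_def)
  have bh: "bij_betw f (V - X) {p..<p+q}" using h by (rule bij_betw_cong[THEN iffD1, rotated]) (simp add: f_def)
  have "bij_betw f (X \<union> (V - X)) ({0..<p} \<union> {p..<p+q})"
    by (rule bij_betw_combine[OF bg bh]) auto
  moreover have "X \<union> (V - X) = V" using XV by auto
  moreover have "{0..<p} \<union> {p..<p+q} = {0..<p+q}" by auto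
  ultimately have bf: "bij_betw f V (Kbip_verts p q)" unfolding Kbip_verts_def by simp
  have fX: "u \<in> X \<Longrightarrow> f u < p" for u using bg by (auto dest: bij_betw_apply)
  have fY: "u \<in> V - X \<Longrightarrow> p \<le> f u \<and> f u < p + q" for u using bh by (auto dest: bij_betw_apply)
  have "\<forall>u\<in>V. \<forall>v\<in>V. {u,v} \<in> E \<longleftrightarrow> {f u, f v} \<in> Kbip_edges p q"
  proof (intro ballI)
    fix u v assume u: "u \<in> V" and v: "v \<in> V"
    show "{u,v} \<in> E \<longleftrightarrow> {f u, f v} \<in> Kbip_edges p q"
      unfolding kbip_mem using ch u v fX fY
      by (cases "u \<in> X"; cases "v \<in> X") (auto, (meson DiffI leD)+)
  qed
  thus ?thesis unfolding graph_iso_def using bf by blast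
qed

locale pgx = pg +
  fixes x
  assumes xV: "x \<in> V" and xmax: "\<forall>v\<in>V. dg v \<le> dg x"
begin

abbreviation "D \<equiv> dg x"
definition "A = nb x"
definition "Bp = V - A - {x}"

lemma AV: "A \<subseteq> V" unfolding A_def using nb_sub by auto
lemma finA: "finite A" using fin_nb unfolding A_def by auto
lemma finBp: "finite Bp" using finV unfolding Bp_def by auto
lemma cardA: "card A = D" unfolding A_def using deg_nb[OF xV] by simp
lemma xA: "x \<notin> A" unfolding A_def using nb_irr by auto
lemma BpV: "Bp \<subseteq> V" unfolding Bp_def by auto
lemma cardBp: "card Bp + D + 1 = 2*n"
proof -
  have eq: "V = insert x (A \<union> Bp)" using AV xV unfolding Bp_def by auto
  have "A \<inter> Bp = {}" "x \<notin> A \<union> Bp" using xA unfolding Bp_def by auto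
  hence "card (insert x (A \<union> Bp)) = card A + card Bp + 1" using finA finBp
    by (simp add: card_Un_disjoint)
  hence "card V = card A + card Bp + 1" using arg_cong[OF eq, of card] by simp
  thus ?thesis using cardV cardA by simp
qed
lemma Dle: "D + 1 \<le> 2*n" using cardBp by simp

lemma sumV: "(\<Sum>v\<in>V. dg v) = D + (\<Sum>v\<in>A. dg v) + (\<Sum>v\<in>Bp. dg v)"
proof -
  have eq: "V = insert x (A \<union> Bp)" using AV xV unfolding Bp_def by auto
  have "A \<inter> Bp = {}" "x \<notin> A \<union> Bp" using xA unfolding Bp_def by auto
  hence "sum dg (insert x (A \<union> Bp)) = D + sum dg A + sum dg Bp" using finA finBp
    by (simp add: sum.union_disjoint)
  thus ?thesis using arg_cong[OF eq, of "sum dg"] by simp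
qed

lemma twoE: "2 * card E + 2 \<ge> 2 * n^2"
proof -
  have "n^2 \<ge> 1" using n3 by simp
  thus ?thesis using cardE by linarith
qed

lemma sum_le2: "(\<Sum>v\<in>V. dg v) + 2 \<ge> 2 * n^2" using twoE handshake by simp

lemma aInV: "a \<in> A \<Longrightarrow> a \<in> V" using AV by auto
lemma aE: "a \<in> A \<Longrightarrow> {a,x} \<in> E" "a \<in> A \<Longrightarrow> {x,a} \<in> E"
  unfolding A_def using nbE nbE' by auto
lemma dgle: "v \<in> V \<Longrightarrow> dg v \<le> D" using xmax by auto

lemma S0: "D \<ge> n"
proof (rule ccontr)
  assume "\<not> n \<le> D"
  hence "D + 1 \<le> n" by simp
  have "(\<Sum>v\<in>V. dg v) \<le> card V * D" using sum_bounded_above[of V dg D] dgle by simp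
  hence "(\<Sum>v\<in>V. dg v) \<le> 2 * n * D" using cardV by simp
  also have "\<dots> \<le> 2 * n * (n - 1)" using \<open>D + 1 \<le> n\<close> by simp
  finally have "2 * n * (n - 1) + 2 \<ge> 2 * n^2" using sum_le2 by linarith
  moreover have "2 * n * (n - 1) + 2 < 2 * n^2"
  proof -
    have "2 * n * (n - 1) + 2 * n = 2 * n^2" using n3 by (cases n) (auto simp: power2_eq_square algebra_simps)
    thus ?thesis using n3 by linarith
  qed
  ultimately show False by linarith
qed

lemma sum_ge_of_le:
  assumes "finite S" "a \<in> S" "\<forall>v\<in>S - {a}. f v \<le> K"
  shows "sum f S \<le> f a + (card S - 1) * K"
proof -
  have "sum f S = f a + sum f (S - {a})" using assms by (simp add: sum.remove)
  moreover have "sum f (S - {a}) \<le> card (S - {a}) * K" using sum_bounded_above[of "S - {a}" f K] assms by simp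
  moreover have "card (S - {a}) = card S - 1" using assms by simp
  ultimately show ?thesis by simp
qed

lemma S1:
  assumes indep: "\<forall>a\<in>A. \<forall>b\<in>A. {a,b} \<notin> E"
  shows "graph_iso V E (Kbip_verts (n - 1) (n + 1)) (Kbip_edges (n - 1) (n + 1))"
proof -
  define B where "B = V - A"
  have finB: "finite B" unfolding B_def using finV by simp
  have xB: "x \<in> B" unfolding B_def using xV xA by simp
  have cardB: "card B + D = 2*n"
    unfolding B_def using card_Diff_subset[OF finA AV] cardV cardA card_mono[OF finV AV] by simp
  have nbA: "nb a \<subseteq> B" if a: "a \<in> A" for a
  proof
    fix w assume w: "w \<in> nb a"
    have "w \<notin> A" using indep a nbE[OF w] by blast
    thus "w \<in> B" unfolding B_def using nbV[OF w] by simp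
  qed
  have dgA: "dg a \<le> card B" if a: "a \<in> A" for a
    using deg_nb[OF aInV[OF a]] card_mono[OF finB nbA[OF a]] by simp
  have sA: "sum dg A \<le> D * card B" using sum_bounded_above[of A dg "card B"] dgA cardA by simp
  have sB: "sum dg B \<le> card B * D" using sum_bounded_above[of B dg D] dgle unfolding B_def by simp
  have sVAB: "sum dg V = sum dg A + sum dg B"
  proof -
    have "V = A \<union> B" "A \<inter> B = {}" unfolding B_def using AV by auto
    thus ?thesis using finA finB sum.union_disjoint by metis
  qed
  have main: "2 * n^2 \<le> sum dg A + sum dg B + 2" using sum_le2 sVAB by simp
  obtain k where Dk: "D = n + k" using S0 le_Suc_ex by blast
  have kn: "k \<le> n" using Dk cardB by simp
  obtain m where nm: "n = k + m" using kn le_Suc_ex by blast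
  have cB: "card B = m" using cardB Dk nm by simp
  have "2 * n^2 \<le> 2 * (D * m) + 2" using main sA sB cB by (simp add: mult.commute)
  moreover have "n^2 = D * m + k * k" using Dk nm by (simp add: power2_eq_square algebra_simps)
  ultimately have "k * k \<le> 1" by simp
  hence k01: "k = 0 \<or> k = 1" by (cases k) auto
  show ?thesis
  proof (cases "k = 0")
    case True
    hence Dn: "D = n" and cBn: "card B = n" using Dk nm cB by auto
    have sA2: "n * n \<le> sum dg A + 2" using main sB cBn Dn by (simp add: power2_eq_square)
    obtain a where a: "a \<in> A" "dg a = n"
    proof (rule ccontr)
      assume "\<not> thesis"
      hence "\<forall>a\<in>A. dg a \<le> n - 1" using that dgA cBn by force
      hence "sum dg A \<le> n * (n - 1)" using sum_bounded_above[of A dg "n - 1"] cardA Dn by simp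
      moreover have "n * (n - 1) + 2 < n * n" using n3 by (cases n) (auto simp: algebra_simps)
      ultimately show False using sA2 by linarith
    qed
    obtain a' where a': "a' \<in> A" "a' \<noteq> a" "dg a' \<ge> 2"
    proof (rule ccontr)
      assume "\<not> thesis"
      hence "\<forall>v\<in>A - {a}. dg v \<le> 1" using that by force
      hence "sum dg A \<le> dg a + (card A - 1) * 1" using sum_ge_of_le[OF finA a(1)] by blast
      hence "sum dg A \<le> n + (n - 1)" using a cardA Dn by simp
      moreover have "n + (n - 1) + 2 < n * n" using n3 by (cases n; cases "n - 1") (auto simp: algebra_simps)
      ultimately show False using sA2 by linarith
    qed
    have nba: "nb a = B" using card_subset_eq[OF finB nbA[OF a(1)]] deg_nb[OF aInV[OF a(1)]] a(2) cBn by simp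
    obtain bb where bb: "bb \<in> nb a'" "bb \<noteq> x"
    proof (rule ccontr)
      assume "\<not> thesis"
      hence "nb a' \<subseteq> {x}" using that by blast
      hence "card (nb a') \<le> 1" using card_mono[of "{x}" "nb a'"] by simp
      thus False using a'(3) deg_nb[OF aInV[OF a'(1)]] by simp
    qed
    have "bb \<in> B" using nbA[OF a'(1)] bb(1) by blast
    hence "{bb,a} \<in> E" using nba nbE by blast
    hence e1: "{a,bb} \<in> E" using ecomm by blast
    have e2: "{bb,a'} \<in> E" using nbE[OF bb(1)] .
    have e3: "{a',x} \<in> E" using aE(1)[OF a'(1)] .
    have "a \<noteq> x" using a(1) xA by blast
    thus ?thesis using no_p3[OF e1 e2 e3] a'(2) bb(2) a(2) Dn by auto
  next
    case False
    hence k1: "k = 1" using k01 by simp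
    hence Dm: "D = m + 2" and nm1: "n = m + 1" using Dk nm by auto
    have sA2: "m * (m + 2) \<le> sum dg A"
    proof -
      have "2 * n^2 = 2 * (m * (m + 2)) + 2" using nm1 by (simp add: power2_eq_square algebra_simps)
      thus ?thesis using main sB cB Dm by (simp add: algebra_simps)
    qed
    have dgAm: "dg a = m" if a: "a \<in> A" for a
    proof (rule ccontr)
      assume ne: "dg a \<noteq> m"
      hence lt: "dg a \<le> m - 1" "m \<ge> 1" using dgA[OF a] cB by auto
      have "\<forall>v\<in>A - {a}. dg v \<le> m" using dgA cB by auto
      hence "sum dg A \<le> dg a + (card A - 1) * m" using sum_ge_of_le[OF finA a] by blast
      hence "sum dg A \<le> (m - 1) + (m + 1) * m" using lt cardA Dm by simp
      moreover have "(m - 1) + (m + 1) * m < m * (m + 2)" using lt(2) by (cases m) (auto simp: algebra_simps)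
      ultimately show False using sA2 by linarith
    qed
    have nbaB: "nb a = B" if a: "a \<in> A" for a
      using card_subset_eq[OF finB nbA[OF a]] deg_nb[OF aInV[OF a]] dgAm[OF a] cB by simp
    have nbbA: "nb b = A" if b: "b \<in> B" for b
    proof -
      have bV: "b \<in> V" using b unfolding B_def by simp
      have sub: "A \<subseteq> nb b" using nbaB b nb_sym by blast
      have "card (nb b) \<le> card A" using deg_nb[OF bV] dgle[OF bV] cardA by simp
      thus ?thesis using card_seteq[OF fin_nb sub] by simp
    qed
    have ch: "\<forall>u\<in>V. \<forall>v\<in>V. ({u,v} \<in> E \<longleftrightarrow> (u \<in> B \<and> v \<notin> B) \<or> (u \<notin> B \<and> v \<in> B))"
    proof (intro ballI)
      fix u v assume u: "u \<in> V" and v: "v \<in> V"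
      show "({u,v} \<in> E \<longleftrightarrow> (u \<in> B \<and> v \<notin> B) \<or> (u \<notin> B \<and> v \<in> B))"
      proof
        assume e: "{u,v} \<in> E"
        hence "u \<in> nb v" using nb_iff by blast
        thus "(u \<in> B \<and> v \<notin> B) \<or> (u \<notin> B \<and> v \<in> B)"
          using nbaB nbbA v unfolding B_def by auto
      next
        assume "(u \<in> B \<and> v \<notin> B) \<or> (u \<notin> B \<and> v \<in> B)"
        thus "{u,v} \<in> E"
        proof
          assume h: "u \<in> B \<and> v \<notin> B"
          hence "v \<in> A" using v unfolding B_def by simp
          hence "u \<in> nb v" using nbaB h by blast
          thus ?thesis using nbE by blast
        next
          assume h: "u \<notin> B \<and> v \<in> B"
          hence "u \<in> A" using u unfolding B_def by simp
          hence "u \<in> nb v" using nbbA h by blast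
          thus ?thesis using nbE by blast
        qed
      qed
    qed
    have "card (V - B) = n + 1" using AV cardA Dm nm1 unfolding B_def by (simp add: Diff_Diff_Int Int_absorb1)
    moreover have "card B = n - 1" using cB nm1 by simp
    moreover have "B \<subseteq> V" unfolding B_def by auto
    ultimately show ?thesis using iso_bip[OF finV _ _ _ ch] by blast
  qed
qed

end

lemma arith_S2:
  fixes D l j b0 b1 r n :: int
  assumes "l + j = D" "b0 + b1 = r" "2 \<le> j" "j \<le> b0" "n \<le> D" "r + D + 1 = 2*n" "0 \<le> l" "0 \<le> b1"
  shows "D + l*(1 + b1) + j*(j + b1) + b0*(r - 1) + b1*D + 2 < 2*n^2"
proof -
  have l: "l = D - j" and b1: "b1 = r - b0" and r: "r = 2*n - D - 1" using assms by linarith+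
  have T: "D + l*(1 + b1) + j*(j + b1) + b0*(r - 1) + b1*D
      = 4*(n*D) - 2*(D*D) - 3*(b0*D) + j*j - j + 2*(n*b0) - 2*b0"
    unfolding l b1 r by (simp add: algebra_simps)
  have "j*(j-1) \<le> b0*(D-1)" using assms by (intro mult_mono) auto
  hence i1: "j*j - j \<le> b0*D - b0" by (simp add: algebra_simps)
  have "0 \<le> (n - D)^2" by simp
  hence i2: "2*(n*D) - D*D \<le> n*n" by (simp add: power2_eq_square algebra_simps)
  have "b0*(n - D) \<le> 0" using assms by (intro mult_nonneg_nonpos) auto
  hence i3: "n*b0 - b0*D \<le> 0" by (simp add: algebra_simps)
  have "n^2 = n*n" by (simp add: power2_eq_square)
  thus ?thesis using T i1 i2 i3 assms(3,4) by linarith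
qed


context pgx
begin

lemma S2:
  assumes q: "q \<in> Bp" "dg q = D" and ab: "a0 \<in> A" "b0 \<in> A" "{a0,b0} \<in> E"
  shows False
proof -
  define W0 where "W0 = {p\<in>V. nb p \<inter> A = {}}"
  define L where "L = A \<inter> W0"
  define J where "J = A - W0"
  define B0 where "B0 = Bp \<inter> W0"
  define B1 where "B1 = Bp - B0"
  have fins: "finite L" "finite J" "finite B0" "finite B1"
    using finA finBp unfolding L_def J_def B0_def B1_def by auto
  have qV: "q \<in> V" and qA: "q \<notin> A" and qx: "q \<noteq> x" using q unfolding Bp_def by auto
  have nbq: "nb q \<subseteq> L \<union> B0"
  proof
    fix p assume p: "p \<in> nb q"
    have pV: "p \<in> V" using nbV[OF p] .
    have px: "p \<noteq> x"
    proof
      assume "p = x"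
      hence "q \<in> nb x" using p nb_sym by blast
      thus False using qA unfolding A_def by simp
    qed
    have "nb p \<inter> A = {}"
    proof (rule ccontr)
      assume "nb p \<inter> A \<noteq> {}"
      then obtain a where a: "a \<in> nb p" "a \<in> A" by blast
      have e1: "{x,a} \<in> E" using aE(2)[OF a(2)] .
      have e2: "{a,p} \<in> E" using nbE[OF a(1)] .
      have e3: "{p,q} \<in> E" using nbE[OF p] .
      have "a \<noteq> q" using a(2) qA by blast
      thus False using no_p3[OF e1 e2 e3] px qx q(2) by auto
    qed
    hence "p \<in> W0" unfolding W0_def using pV by simp
    thus "p \<in> L \<union> B0" unfolding L_def B0_def Bp_def using pV px by blast
  qed
  have c1: "D \<le> card L + card B0"
  proof -
    have "D = card (nb q)" using deg_nb[OF qV] q(2) by simp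
    also have "\<dots> \<le> card (L \<union> B0)" using card_mono nbq fins by (simp add: card_mono)
    also have "\<dots> \<le> card L + card B0" by (rule card_Un_le)
    finally show ?thesis .
  qed
  have c2: "card L + card J = D"
  proof -
    have "A = L \<union> J" "L \<inter> J = {}" unfolding L_def J_def by auto
    thus ?thesis using cardA fins card_Un_disjoint by metis
  qed
  have c3: "card B0 + card B1 = card Bp"
  proof -
    have "Bp = B0 \<union> B1" "B0 \<inter> B1 = {}" unfolding B0_def B1_def by auto
    thus ?thesis using fins card_Un_disjoint by metis
  qed
  have a0J: "a0 \<in> J" and b0J: "b0 \<in> J"
  proof -
    have "b0 \<in> nb a0" "a0 \<in> nb b0" using ab(3) nb_iff ecomm by auto
    thus "a0 \<in> J" "b0 \<in> J" using ab unfolding J_def W0_def by auto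
  qed
  have "a0 \<noteq> b0" using edge(3)[OF ab(3)] .
  hence jge: "2 \<le> card J"
  proof -
    have "{a0,b0} \<subseteq> J" using a0J b0J by auto
    hence "card {a0,b0} \<le> card J" using card_mono fins by blast
    thus ?thesis using \<open>a0 \<noteq> b0\<close> by simp
  qed
  have notB0: "w \<notin> B0" if "w \<in> nb a" "a \<in> A" for w a
  proof
    assume "w \<in> B0"
    hence "nb w \<inter> A = {}" unfolding B0_def W0_def by simp
    moreover have "a \<in> nb w" using that nb_sym by blast
    ultimately show False using that by blast
  qed
  have dL: "dg a \<le> 1 + card B1" if a: "a \<in> L" for a
  proof -
    have aA: "a \<in> A" using a unfolding L_def by simp
    have "nb a \<subseteq> insert x B1"
    proof
      fix w assume w: "w \<in> nb a"
      have "w \<notin> A" using a w unfolding L_def W0_def by blast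
      moreover have "w \<notin> B0" using notB0[OF w aA] .
      ultimately show "w \<in> insert x B1" using nbV[OF w] unfolding B1_def Bp_def by blast
    qed
    hence "card (nb a) \<le> card (insert x B1)" using card_mono fins by (simp add: card_mono)
    also have "\<dots> \<le> 1 + card B1" using card_insert_le_m1 fins by (simp add: card_insert_if)
    finally show ?thesis using deg_nb[OF aInV[OF aA]] by simp
  qed
  have dJ: "dg a \<le> card J + card B1" if a: "a \<in> J" for a
  proof -
    have aA: "a \<in> A" using a unfolding J_def by simp
    have "nb a \<subseteq> insert x ((J - {a}) \<union> B1)"
    proof
      fix w assume w: "w \<in> nb a"
      show "w \<in> insert x ((J - {a}) \<union> B1)"
      proof (cases "w \<in> A")
        case True
        hence "a \<in> nb w \<inter> A" using w nb_sym aA by blast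
        hence "w \<in> J" using True unfolding J_def W0_def by blast
        moreover have "w \<noteq> a" using w nb_irr by blast
        ultimately show ?thesis by blast
      next
        case False
        moreover have "w \<notin> B0" using notB0[OF w aA] .
        ultimately show ?thesis using nbV[OF w] unfolding B1_def Bp_def by blast
      qed
    qed
    hence "card (nb a) \<le> card (insert x ((J - {a}) \<union> B1))" using fins by (simp add: card_mono)
    also have "\<dots> \<le> 1 + card ((J - {a}) \<union> B1)" using fins by (simp add: card_insert_if)
    also have "\<dots> \<le> 1 + (card (J - {a}) + card B1)" using card_Un_le by simp
    also have "\<dots> = card J + card B1" using a fins by (simp add: card_Diff_singleton) (metis Suc_pred card_gt_0_iff empty_iff)
    finally show ?thesis using deg_nb[OF aInV[OF aA]] by simp
  qed
  have dB0: "dg b + 1 \<le> card Bp" if b: "b \<in> B0" for b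
  proof -
    have bBp: "b \<in> Bp" and bW: "nb b \<inter> A = {}" using b unfolding B0_def W0_def by auto
    have "nb b \<subseteq> Bp - {b}"
    proof
      fix w assume w: "w \<in> nb b"
      have "w \<notin> A" using w bW by blast
      moreover have "w \<noteq> x"
      proof
        assume "w = x"
        hence "b \<in> A" using w nb_sym unfolding A_def by blast
        thus False using bBp unfolding Bp_def by blast
      qed
      moreover have "w \<noteq> b" using w nb_irr by blast
      ultimately show "w \<in> Bp - {b}" using nbV[OF w] unfolding Bp_def by blast
    qed
    hence "card (nb b) \<le> card (Bp - {b})" using finBp by (simp add: card_mono)
    moreover have "card (Bp - {b}) + 1 = card Bp" using bBp finBp
      by (simp add: card_Diff_singleton) (metis Suc_pred card_gt_0_iff empty_iff)
    moreover have "b \<in> V" using bBp BpV by blast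
    ultimately show ?thesis using deg_nb by simp
  qed
  have sL: "sum dg L \<le> card L * (1 + card B1)" using sum_bounded_above[of L dg "1 + card B1"] dL by simp
  have sJ: "sum dg J \<le> card J * (card J + card B1)" using sum_bounded_above[of J dg "card J + card B1"] dJ by simp
  have sB0: "sum dg B0 \<le> card B0 * (card Bp - 1)" using sum_bounded_above[of B0 dg "card Bp - 1"] dB0
    by (simp add: add_le_imp_le_diff)
  have sB1: "sum dg B1 \<le> card B1 * D" using sum_bounded_above[of B1 dg] dgle BpV unfolding B1_def by auto
  have sA: "sum dg A = sum dg L + sum dg J"
  proof -
    have "A = L \<union> J" "L \<inter> J = {}" unfolding L_def J_def by auto
    thus ?thesis using fins sum.union_disjoint by metis
  qed
  have sBp: "sum dg Bp = sum dg B0 + sum dg B1"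
  proof -
    have "Bp = B0 \<union> B1" "B0 \<inter> B1 = {}" unfolding B0_def B1_def by auto
    thus ?thesis using fins sum.union_disjoint by metis
  qed
  have jb: "card J \<le> card B0" using c1 c2 by simp
  have b0ge: "card B0 \<ge> 2" using jb jge by simp
  have Bpge: "card Bp \<ge> 1" using c3 b0ge by simp
  define T where "T = D + card L * (1 + card B1) + card J * (card J + card B1) + card B0 * (card Bp - 1) + card B1 * D"
  have "sum dg V \<le> T" unfolding T_def using sumV sA sBp sL sJ sB0 sB1 by linarith
  hence le: "2 * n^2 \<le> T + 2" using sum_le2 by linarith
  have "int T + 2 < 2 * (int n)^2"
  proof -
    have h: "int (card Bp - 1) = int (card Bp) - 1" using Bpge by simp
    have "int T = int D + int (card L) * (1 + int (card B1)) + int (card J) * (int (card J) + int (card B1))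
        + int (card B0) * (int (card Bp) - 1) + int (card B1) * int D"
      unfolding T_def by (simp only: of_nat_add of_nat_mult of_nat_1 h)
    moreover have "int D + int (card L) * (1 + int (card B1)) + int (card J) * (int (card J) + int (card B1))
        + int (card B0) * (int (card Bp) - 1) + int (card B1) * int D + 2 < 2 * (int n)^2"
      apply (rule arith_S2)
      using c2 c3 jge jb S0 cardBp by linarith+
    ultimately show ?thesis by simp
  qed
  moreover have "int (2 * n^2) \<le> int (T + 2)" using le by (simp only: of_nat_le_iff)
  hence "2 * (int n)^2 \<le> int T + 2" by simp
  ultimately show False by linarith
qed

end

lemma ar1:
  fixes D m t n S :: int
  assumes "D + m = 2*n" "D = m + t" "t \<ge> 2" "m \<ge> 2" "2*S + 2 = (t - 1)*t"
  shows "D + m*D + S + (m - 1)*(m + 1) + 2 < 2*n^2"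
proof -
  have n4: "4*n^2 = (D+m)^2" using assms(1) by (simp add: power2_eq_square algebra_simps)
  have "m*(t-1) \<ge> 2*(t-1)" using assms by (intro mult_right_mono) auto
  hence h: "m*t - m \<ge> 2*t - 2" by (simp add: algebra_simps)
  define L where "L = D + m*D + S + (m - 1)*(m + 1) + 2"
  have "(D+m)^2 - 2*L = 2*(m*t - m) - t"
    unfolding L_def using assms(2,5) by (simp add: power2_eq_square algebra_simps)
  hence "L < 2*n^2" using n4 h assms(3) by (smt (verit))
  thus ?thesis unfolding L_def .
qed

lemma ar2:
  fixes D m t n S c :: int
  assumes "D + m = 2*n" "D = m + t" "t \<ge> 3" "m \<ge> 2" "2*S + 2 = (t - 1)*t" "c \<le> D - 1"
  shows "D + m*D + S - (c - m) + 2 + (m - 1)*c + 2 < 2*n^2"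
proof -
  have n4: "4*n^2 = (D+m)^2" using assms(1) by (simp add: power2_eq_square algebra_simps)
  have "(m-2)*c \<le> (m-2)*(D-1)" using assms by (intro mult_left_mono) auto
  hence h: "m*c - 2*c \<le> m*D - m - 2*D + 2" by (simp add: algebra_simps)
  define L where "L = D + m*D + S - (c - m) + 2 + (m - 1)*c + 2"
  have "(D+m)^2 - 2*L = D*D + m*m - 2*D - t*t + t - 2*m - 6 - 2*(m*c - 2*c)"
    unfolding L_def using assms(5) by (simp add: power2_eq_square algebra_simps)
  moreover have "D*D + m*m - 2*(m*D) = t*t" using assms(2) by (simp add: algebra_simps)
  ultimately have "L < 2*n^2" using n4 h assms(2,3,4) by (smt (verit))
  thus ?thesis unfolding L_def .
qed

lemma ar3:
  fixes D m t n S c :: int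
  assumes "D + m = 2*n" "D = m + t" "t \<ge> 2" "m \<ge> 2" "2*S + 2 = (t - 1)*t" "c \<le> m" "c \<ge> 0"
    and nt: "\<not> (t = 2 \<and> m = 2)"
  shows "D + m*D + S + 2 + (m - 1)*c + 2 < 2*n^2"
proof -
  have n4: "4*n^2 = (D+m)^2" using assms(1) by (simp add: power2_eq_square algebra_simps)
  have "(m-1)*c \<le> (m-1)*m" using assms by (intro mult_left_mono) auto
  hence h: "m*c - c \<le> m*m - m" by (simp add: algebra_simps)
  have "t*(2*m-1) > 6"
  proof (cases "m \<ge> 3")
    case True
    hence "t*(2*m-1) \<ge> 2*5" using assms(3) by (intro mult_mono) auto
    thus ?thesis by linarith
  next
    case False
    hence "t \<ge> 3" "m = 2" using nt assms(3,4) by auto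
    thus ?thesis by simp
  qed
  hence h2: "2*(m*t) - t > 6" by (simp add: algebra_simps)
  define L where "L = D + m*D + S + 2 + (m - 1)*c + 2"
  have "(D+m)^2 - 2*L = D*D - m*m - 2*D + 2*(m*m) - t*t + t - 6 - 2*(m*c - c)"
    unfolding L_def using assms(5) by (simp add: power2_eq_square algebra_simps)
  moreover have "D*D - m*m = 2*(m*t) + t*t" using assms(2) by (simp add: algebra_simps)
  ultimately have "L < 2*n^2" using n4 h h2 assms(2) by (smt (verit))
  thus ?thesis unfolding L_def .
qed


lemma sum2: "1 \<le> (s::nat) \<Longrightarrow> 2 * (\<Sum>i\<in>{2..s}. i) + 2 = s * (s + 1)"
proof (induction s)
  case 0 thus ?case by simp
next
  case (Suc s)
  show ?case
  proof (cases "s = 0")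
    case True thus ?thesis by simp
  next
    case False
    hence "{2..Suc s} = insert (Suc s) {2..s}" by auto
    hence "(\<Sum>i\<in>{2..Suc s}. i) = Suc s + (\<Sum>i\<in>{2..s}. i)" by simp
    thus ?thesis using Suc False by (simp add: algebra_simps)
  qed
qed

context pgx
begin

lemma S3:
  assumes Dn: "D = n" and noB: "\<forall>q\<in>Bp. dg q \<noteq> D" and ab: "a0 \<in> A" "b0 \<in> A" "{a0,b0} \<in> E"
  shows False
proof -
  have cBp: "card Bp = n - 1" using cardBp Dn by simp
  have sA: "sum dg A \<le> n * n" using sum_bounded_above[of A dg D] dgle AV cardA Dn by auto
  have "\<forall>q\<in>Bp. dg q \<le> n - 1" using noB dgle BpV Dn by fastforce
  hence sB: "sum dg Bp \<le> (n - 1) * (n - 1)" using sum_bounded_above[of Bp dg "n - 1"] cBp by simp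
  have main: "2 * n^2 \<le> n + sum dg A + sum dg Bp + 2" using sum_le2 sumV Dn by simp
  obtain k where nk: "n = k + 1" using n3 by (intro that[of "n - 1"]) simp
  have "2 * n^2 \<le> n + n * n + (n - 1) * (n - 1) + 2" using main sA sB by linarith
  hence "k \<le> 2" using nk by (simp add: power2_eq_square algebra_simps)
  hence n3': "n = 3" using n3 nk by simp
  hence sA9: "9 \<le> sum dg A" using main sB by (simp add: power2_eq_square)
  have cA: "card A = 3" using cardA Dn n3' by simp
  have full: "dg a = 3" if a: "a \<in> A" for a
  proof -
    have "\<forall>v\<in>A - {a}. dg v \<le> 3" using dgle AV Dn n3' by auto
    hence "sum dg A \<le> dg a + (card A - 1) * 3" using sum_ge_of_le[OF finA a] by blast
    hence "3 \<le> dg a" using sA9 cA by simp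
    moreover have "dg a \<le> 3" using dgle AV a Dn n3' by auto
    ultimately show ?thesis by simp
  qed
  have "card {a0,b0} \<le> 2" by (cases "a0 = b0") auto
  hence "\<not> A \<subseteq> {a0,b0}" using card_mono[of "{a0,b0}" A] cA by auto
  then obtain c where c: "c \<in> A" "c \<notin> {a0,b0}" by blast
  have e1: "{c,x} \<in> E" using aE(1)[OF c(1)] .
  have e2: "{x,b0} \<in> E" using aE(2)[OF ab(2)] .
  have e3: "{b0,a0} \<in> E" using ab(3) ecomm by blast
  have "x \<noteq> a0" using ab(1) xA by blast
  thus False using no_p3[OF e1 e2 e3] c full[OF c(1)] full[OF ab(1)] by auto
qed

end

context pgx
begin

lemma noA_D: assumes "D \<ge> n + 1" "a \<in> A" shows "dg a \<noteq> D"
proof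
  assume h: "dg a = D"
  have e: "{x,a} \<in> E" using aE(2)[OF assms(2)] .
  have "2 * D \<ge> card V + 2" using assms(1) cardV by simp
  thus False using adj_eq[OF e h[symmetric]] by blast
qed

lemma inA: "w \<in> V \<Longrightarrow> w \<noteq> x \<Longrightarrow> Bp = {} \<Longrightarrow> w \<in> A" unfolding Bp_def by blast

lemma S5_r0: assumes Dn: "D \<ge> n + 1" and Bp0: "Bp = {}" shows False
proof -
  have D2n: "D + 1 = 2*n" using cardBp Bp0 by simp
  define M where "M = {a\<in>A. dg a \<ge> 3}"
  have finM: "finite M" using finA unfolding M_def by simp
  have MA: "M \<subseteq> A" unfolding M_def by auto
  have injM: "inj_on dg M"
  proof (rule inj_onI)
    fix a a' assume a: "a \<in> M" and a': "a' \<in> M" and e: "dg a = dg a'"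
    show "a = a'"
    proof (rule ccontr)
      assume ne: "a \<noteq> a'"
      have aA: "a \<in> A" "a' \<in> A" using a a' MA by auto
      have "nb a' - {x,a} \<noteq> {}"
      proof
        assume "nb a' - {x,a} = {}"
        hence "nb a' \<subseteq> {x,a}" by blast
        hence "card (nb a') \<le> card {x,a}" by (rule card_mono[rotated]) simp
        also have "\<dots> \<le> 2" by (simp add: card_insert_le_m1)
        finally show False using a' deg_nb[OF aInV[OF aA(2)]] unfolding M_def by simp
      qed
      then obtain c where c: "c \<in> nb a'" "c \<noteq> x" "c \<noteq> a" by blast
      have cA: "c \<in> A" using inA[OF nbV[OF c(1)] c(2) Bp0] .
      have e1: "{a,x} \<in> E" using aE(1)[OF aA(1)] .
      have e2: "{x,c} \<in> E" using aE(2)[OF cA] .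
      have e3: "{c,a'} \<in> E" using nbE[OF c(1)] .
      have "x \<noteq> a'" using aA(2) xA by blast
      thus False using no_p3[OF e1 e2 e3] c(3) ne e by auto
    qed
  qed
  have bndM: "dg a \<le> card M + 1" if a: "a \<in> M" for a
  proof -
    have aA: "a \<in> A" using a MA by auto
    define D2 where "D2 = {c\<in>V. dg c = 2}"
    have sub: "nb a \<subseteq> insert x ((M - {a}) \<union> (nb a \<inter> D2))"
    proof
      fix w assume w: "w \<in> nb a"
      show "w \<in> insert x ((M - {a}) \<union> (nb a \<inter> D2))"
      proof (cases "w = x")
        case False
        have wV: "w \<in> V" using nbV[OF w] .
        have wA: "w \<in> A" using inA[OF wV False Bp0] .
        have "{x,a} \<subseteq> nb w" using wA w nb_sym unfolding A_def by auto
        hence "card {x,a} \<le> card (nb w)" by (rule card_mono[OF fin_nb])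
        moreover have "x \<noteq> a" using aA xA by blast
        ultimately have "2 \<le> dg w" using deg_nb[OF wV] by simp
        moreover have "w \<noteq> a" using w nb_irr by blast
        ultimately show ?thesis unfolding M_def D2_def using wA wV w by auto
      qed simp
    qed
    have c1: "card (nb a \<inter> D2) \<le> 1"
    proof -
      have "\<forall>c\<in>nb a \<inter> D2. \<forall>c'\<in>nb a \<inter> D2. c = c'"
      proof (intro ballI, rule ccontr)
        fix c c' assume c: "c \<in> nb a \<inter> D2" and c': "c' \<in> nb a \<inter> D2" and ne: "c \<noteq> c'"
        have dc: "dg c = 2" "dg c' = 2" using c c' unfolding D2_def by auto
        have "D \<ge> 4" using Dn n3 by simp
        hence cx: "c \<noteq> x" "c' \<noteq> x" using dc by auto
        have cA: "c \<in> A" using inA[OF nbV cx(1) Bp0] c by blast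
        have e1: "{c,x} \<in> E" using aE(1)[OF cA] .
        have e2: "{x,a} \<in> E" using aE(2)[OF aA] .
        have e3: "{a,c'} \<in> E" using nbE' c' by blast
        have "c \<noteq> a" using c nb_irr by blast
        thus False using no_p3[OF e1 e2 e3] cx ne dc by auto
      qed
      thus ?thesis using card_le_Suc0_iff_eq[of "nb a \<inter> D2"] fin_nb by simp
    qed
    have fin_ins: "finite (insert x ((M - {a}) \<union> (nb a \<inter> D2)))" using finM fin_nb by simp
    have "card (nb a) \<le> card (insert x ((M - {a}) \<union> (nb a \<inter> D2)))" by (rule card_mono[OF fin_ins sub])
    also have "\<dots> \<le> 1 + card ((M - {a}) \<union> (nb a \<inter> D2))" using finM fin_nb by (simp add: card_insert_if)
    also have "\<dots> \<le> 1 + (card (M - {a}) + card (nb a \<inter> D2))" using card_Un_le by simp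
    also have "\<dots> \<le> 1 + (card M - 1) + 1" using c1 a finM by simp
    also have "\<dots> = card M + 1" using a finM by (cases "card M") (auto simp: card_gt_0_iff)
    finally show ?thesis using deg_nb[OF aInV[OF aA]] by simp
  qed
  have M0: "M = {}"
  proof (rule ccontr)
    assume "M \<noteq> {}"
    hence cM: "card M \<ge> 1" using finM by (simp add: Suc_leI card_gt_0_iff)
    have "dg ` M \<subseteq> {3..card M + 1}" using bndM unfolding M_def by auto
    hence "card M \<le> card {3..card M + 1}" by (rule card_inj_on_le[OF injM _ finite_atLeastAtMost])
    thus False using cM by simp
  qed
  have "\<forall>a\<in>A. dg a \<le> 2" using M0 unfolding M_def by auto
  hence "sum dg A \<le> D * 2" using sum_bounded_above[of A dg 2] cardA by simp
  hence "sum dg V \<le> 3 * D" using sumV Bp0 by simp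
  moreover have "3 * n \<le> n * n" using n3 by (intro mult_right_mono) auto
  moreover have "2 * (n * n) \<le> sum dg V + 2" using sum_le2 by (simp add: power2_eq_square)
  ultimately show False using D2n by linarith
qed

lemma int_contra:
  assumes "2 * n^2 \<le> (sv::nat) + 2" "int sv \<le> X" "X + 2 < 2 * (int n)^2"
  shows False
proof -
  have "int (2 * n^2) \<le> int (sv + 2)" using assms(1) by (simp only: of_nat_le_iff)
  hence "2 * (int n)^2 \<le> int sv + 2" by simp
  thus False using assms(2,3) by linarith
qed

lemma S5: assumes Dn: "D \<ge> n + 1" and noB: "\<forall>q\<in>Bp. dg q \<noteq> D" shows False
proof (cases "Bp = {}")
  case True thus ?thesis using S5_r0 Dn by blast
next
  case False
  obtain qs where qs: "qs \<in> Bp" "\<forall>q\<in>Bp. dg q \<le> dg qs"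
  proof -
    have "Max (dg ` Bp) \<in> dg ` Bp" using False finBp by simp
    then obtain qs where "qs \<in> Bp" "dg qs = Max (dg ` Bp)" by auto
    moreover have "\<forall>q\<in>Bp. dg q \<le> Max (dg ` Bp)" using finBp by simp
    ultimately show ?thesis using that by auto
  qed
  define c where "c = dg qs"
  define m where "m = 2*n - D"
  have Dm: "D + m = 2*n" using Dle unfolding m_def by simp
  have mBp: "card Bp + 1 = m" using cardBp unfolding m_def by simp
  have "0 < card Bp" using False finBp by (simp add: card_gt_0_iff)
  hence m2: "m \<ge> 2" using mBp by linarith
  have qsV: "qs \<in> V" and qsA: "qs \<notin> A" and qsx: "qs \<noteq> x" using qs(1) unfolding Bp_def by auto
  have cD: "c + 1 \<le> D" using dgle[OF qsV] noB qs(1) unfolding c_def by fastforce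
  have dA: "dg a + 1 \<le> D" if "a \<in> A" for a using noA_D[OF Dn that] dgle aInV[OF that] by fastforce
  have sBp: "sum dg Bp \<le> (m - 1) * c"
  proof -
    have "card Bp = m - 1" using mBp by simp
    thus ?thesis using sum_bounded_above[of Bp dg c] qs(2) unfolding c_def by simp
  qed
  have nbqs: "c + 2 \<le> card (nb qs \<inter> A) + m"
  proof -
    have sub: "nb qs \<subseteq> (nb qs \<inter> A) \<union> (Bp - {qs})"
    proof
      fix w assume w: "w \<in> nb qs"
      have "w \<noteq> x"
      proof
        assume "w = x" hence "qs \<in> nb x" using w nb_sym by blast
        thus False using qsA unfolding A_def by simp
      qed
      moreover have "w \<noteq> qs" using w nb_irr by blast
      ultimately show "w \<in> (nb qs \<inter> A) \<union> (Bp - {qs})" using nbV[OF w] w unfolding Bp_def by blast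
    qed
    have "c = card (nb qs)" unfolding c_def using deg_nb[OF qsV] .
    also have "\<dots> \<le> card ((nb qs \<inter> A) \<union> (Bp - {qs}))" by (rule card_mono[OF _ sub]) (use fin_nb finBp in simp)
    also have "\<dots> \<le> card (nb qs \<inter> A) + card (Bp - {qs})" by (rule card_Un_le)
    moreover have "card (Bp - {qs}) = card Bp - 1" using qs(1) finBp by (simp add: card_Diff_singleton)
    moreover have "card Bp \<ge> 1" using mBp m2 by linarith
    ultimately show ?thesis using mBp by linarith
  qed
  have C3: "dg a \<noteq> c" if cnt: "2 \<le> card (nb qs \<inter> A)" and a: "a \<in> A" for a
  proof
    assume h: "dg a = c"
    have "\<not> (nb qs \<inter> A \<subseteq> {a})"
    proof
      assume "nb qs \<inter> A \<subseteq> {a}"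
      hence "card (nb qs \<inter> A) \<le> card {a}" by (rule card_mono[rotated]) simp
      thus False using cnt by simp
    qed
    then obtain a' where a': "a' \<in> nb qs" "a' \<in> A" "a' \<noteq> a" by blast
    have e1: "{a,x} \<in> E" using aE(1)[OF a] .
    have e2: "{x,a'} \<in> E" using aE(2)[OF a'(2)] .
    have e3: "{a',qs} \<in> E" using nbE[OF a'(1)] .
    have "a \<noteq> qs" using a qsA by blast
    thus False using no_p3[OF e1 e2 e3] a'(3) qsx h unfolding c_def by auto
  qed
  define K where "K = {a\<in>A. dg a = m + 1}"
  define Hi where "Hi = {a\<in>A. dg a \<ge> m + 2}"
  have finK: "finite K" and finHi: "finite Hi" using finA unfolding K_def Hi_def by auto
  have xnb: "x \<in> nb a" if "a \<in> A" for a using that nb_sym unfolding A_def by blast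
  have adjK: "u \<in> nb v" if u: "u \<in> K" and v: "v \<in> K" and ne: "u \<noteq> v" for u v
  proof (rule ccontr)
    assume "u \<notin> nb v"
    have uA: "u \<in> A" and vA: "v \<in> A" using u v unfolding K_def by auto
    have "dg x + dg v \<le> card V"
      by (rule p2s[OF aInV[OF uA] aInV[OF vA] ne _ xnb[OF uA] _ \<open>u \<notin> nb v\<close>])
        (use u v xA vA in \<open>auto simp: K_def\<close>)
    thus False using v Dm cardV unfolding K_def by simp
  qed
  have cardK: "card K \<le> 2"
  proof (rule ccontr)
    assume "\<not> card K \<le> 2"
    hence c3: "card K \<ge> 3" by simp
    have "K \<noteq> {}" using c3 by auto
    then obtain u where u: "u \<in> K" by blast
    have cu: "card (K - {u}) \<ge> 2" using c3 u finK by (simp add: card_Diff_singleton)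
    have "K - {u} \<noteq> {}"
    proof
      assume h: "K - {u} = {}"
      show False using cu unfolding h by simp
    qed
    then obtain v where v: "v \<in> K" "v \<noteq> u" by blast
    have "card (K - {u,v}) = card K - 2" using u v finK by (simp add: card_Diff_subset)
    hence cuv: "card (K - {u,v}) \<ge> 1" using c3 by linarith
    have "K - {u,v} \<noteq> {}"
    proof
      assume h: "K - {u,v} = {}"
      show False using cuv unfolding h by simp
    qed
    then obtain w where w: "w \<in> K" "w \<noteq> u" "w \<noteq> v" by blast
    have uv: "u \<in> nb v" using adjK u v by blast
    have uw: "u \<in> nb w" using adjK u w by blast
    have vA: "v \<in> A" and wA: "w \<in> A" and uA: "u \<in> A" using u v w unfolding K_def by auto
    have e1: "{v,x} \<in> E" using aE(1)[OF vA] .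
    have e2: "{x,w} \<in> E" using aE(2)[OF wA] .
    have e3: "{w,u} \<in> E" using nbE' uw by blast
    have "x \<noteq> u" using uA xA by blast
    moreover have "dg v = dg u" using u v unfolding K_def by simp
    ultimately show False using no_p3[OF e1 e2 e3] w v by auto
  qed
  have injHi: "inj_on dg Hi"
  proof (rule inj_onI, rule ccontr)
    fix a a' assume a: "a \<in> Hi" and a': "a' \<in> Hi" and e: "dg a = dg a'" and ne: "a \<noteq> a'"
    have aA: "a \<in> A" and a'A: "a' \<in> A" using a a' unfolding Hi_def by auto
    have "dg x + dg a' \<le> card V + 1"
      by (rule p2w[OF aInV[OF aA] aInV[OF a'A] ne e xnb[OF aA]]) (use xA a'A in blast)
    thus False using a' Dm cardV unfolding Hi_def by simp
  qed
  define ex where "ex a = dg a - m" for a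
  have sA1: "sum dg A \<le> m * D + sum ex A"
  proof -
    have "sum dg A \<le> sum (\<lambda>a. m + ex a) A" by (rule sum_mono) (simp add: ex_def)
    also have "\<dots> = m * D + sum ex A" using cardA by (simp add: sum.distrib)
    finally show ?thesis .
  qed
  have sA2: "sum ex A \<le> sum ex Hi + card K"
  proof -
    have AH: "A = Hi \<union> (A - Hi)" unfolding Hi_def by auto
    have disj: "Hi \<inter> (A - Hi) = {}" by auto
    have finAH: "finite (A - Hi)" using finA by simp
    have e1: "sum ex A = sum ex Hi + sum ex (A - Hi)"
      using arg_cong[OF AH, of "sum ex"] sum.union_disjoint[OF finHi finAH disj] by simp
    have e2: "sum ex (A - Hi) \<le> sum (\<lambda>a. if a \<in> K then 1 else 0) (A - Hi)"
    proof (rule sum_mono)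
      fix a assume a: "a \<in> A - Hi"
      hence lt: "dg a < m + 2" unfolding Hi_def by auto
      show "ex a \<le> (if a \<in> K then 1 else 0)"
      proof (cases "dg a = m + 1")
        case True
        hence "a \<in> K" using a unfolding K_def by auto
        thus ?thesis using True unfolding ex_def by simp
      next
        case False
        hence "dg a \<le> m" using lt by simp
        thus ?thesis unfolding ex_def by simp
      qed
    qed
    have e3: "sum (\<lambda>a. if a \<in> K then 1 else 0) (A - Hi) = card K"
    proof -
      have "K \<subseteq> A - Hi" unfolding K_def Hi_def by auto
      hence "(A - Hi) \<inter> K = K" by blast
      thus ?thesis using finAH by (simp add: sum.If_cases)
    qed
    show ?thesis using e1 e2 e3 by linarith
  qed
  have injex: "inj_on ex Hi"
  proof (rule inj_onI)
    fix a a' assume a: "a \<in> Hi" and a': "a' \<in> Hi" and e: "ex a = ex a'"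
    have "m + 2 \<le> dg a" "m + 2 \<le> dg a'" using a a' unfolding Hi_def by auto
    hence "dg a = dg a'" using e unfolding ex_def by linarith
    thus "a = a'" by (rule inj_onD[OF injHi _ a a'])
  qed
  define sm where "sm = D - m - 1"
  have tD: "D \<ge> m + 2" using Dm Dn by linarith
  have exHi: "ex ` Hi \<subseteq> {2..sm}"
  proof
    fix i assume "i \<in> ex ` Hi"
    then obtain a where a: "a \<in> Hi" "i = ex a" by blast
    have aA: "a \<in> A" and g: "m + 2 \<le> dg a" using a(1) unfolding Hi_def by auto
    have "dg a + 1 \<le> D" using dA[OF aA] .
    hence "2 \<le> i" "i \<le> sm" using g a(2) unfolding ex_def sm_def by linarith+
    thus "i \<in> {2..sm}" by simp
  qed
  have sHi: "sum ex Hi \<le> sum id T" if T1: "ex ` Hi \<subseteq> T" and T2: "T \<subseteq> {2..sm}" for T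
  proof -
    have finT: "finite T" using T2 finite_subset by blast
    have "sum ex Hi = sum id (ex ` Hi)" using sum.reindex[OF injex, of id] by simp
    also have "\<dots> \<le> sum id T" by (rule sum_mono2[OF finT T1]) simp
    finally show ?thesis .
  qed
  define S where "S = sum id {2..sm}"
  have S2: "2 * S + 2 = sm * (sm + 1)" unfolding S_def using sum2[of sm] tD unfolding sm_def by simp
  have sumV': "sum dg V = D + sum dg A + sum dg Bp" using sumV .
  have le: "2 * n^2 \<le> sum dg V + 2" using sum_le2 .
  have iDm: "int D + int m = 2 * int n" using Dm by linarith
  have hm1: "int (m - 1) = int m - 1" using m2 by simp
  have iS: "2 * int S + 2 = (int D - int m - 1) * (int D - int m)"
  proof -
    have "int (2 * S + 2) = int (sm * (sm + 1))" using S2 by simp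
    moreover have "int sm = int D - int m - 1" using tD unfolding sm_def by simp
    ultimately show ?thesis by (simp add: algebra_simps)
  qed
  show False
  proof (cases "c \<ge> m + 1")
    case True
    have cnt: "2 \<le> card (nb qs \<inter> A)" using nbqs True by linarith
    show False
    proof (cases "c = m + 1")
      case True
      have K0: "card K = 0"
      proof -
        have "K = {}" using C3[OF cnt] True unfolding K_def by auto
        thus ?thesis by simp
      qed
      have "sum ex Hi \<le> S" unfolding S_def using sHi[OF exHi] by simp
      hence nb: "sum dg V \<le> D + m * D + S + (m - 1) * (m + 1)"
        using sumV' sA1 sA2 K0 sBp True by simp
      have "int (sum dg V) \<le> int (D + m * D + S + (m - 1) * (m + 1))" using nb by (simp only: of_nat_le_iff)
      also have "\<dots> = int D + int m * int D + int S + (int m - 1) * (int m + 1)" by (simp only: of_nat_add of_nat_mult of_nat_1 hm1)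
      finally have iV: "int (sum dg V) \<le> int D + int m * int D + int S + (int m - 1) * (int m + 1)" .
      have "int D + int m * int D + int S + (int m - 1) * (int m + 1) + 2 < 2 * (int n)^2"
        by (rule ar1[where D="int D" and m="int m" and t="int D - int m" and n="int n" and S="int S"]) (use iDm m2 tD iS in auto)
      thus False using int_contra[OF le iV] by blast
    next
      case False
      hence cm2: "c \<ge> m + 2" using \<open>c \<ge> m + 1\<close> by simp
      have cin: "c - m \<in> {2..sm}" using cm2 cD unfolding sm_def by auto
      have "ex ` Hi \<subseteq> {2..sm} - {c - m}"
      proof
        fix i assume i: "i \<in> ex ` Hi"
        then obtain a where a: "a \<in> Hi" "i = ex a" by blast
        have "dg a \<noteq> c" using C3[OF cnt] a unfolding Hi_def by blast
        hence "i \<noteq> c - m" using a cm2 unfolding ex_def Hi_def by auto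
        thus "i \<in> {2..sm} - {c - m}" using exHi i by blast
      qed
      hence sH0: "sum ex Hi \<le> sum id ({2..sm} - {c - m})" using sHi by blast
      have Srm: "S = (c - m) + sum id ({2..sm} - {c - m})" unfolding S_def using cin by (simp add: sum.remove)
      have sH: "sum ex Hi \<le> S - (c - m)" using sH0 Srm by linarith
      have Sge: "c - m \<le> S" using Srm by linarith
      have nb: "sum dg V \<le> D + m * D + (S - (c - m)) + 2 + (m - 1) * c"
        using sumV' sA1 sA2 cardK sBp sH by linarith
      have "int (sum dg V) \<le> int (D + m * D + (S - (c - m)) + 2 + (m - 1) * c)" using nb by (simp only: of_nat_le_iff)
      also have "\<dots> = int D + int m * int D + int S - (int c - int m) + 2 + (int m - 1) * int c"
      proof -
        have h2: "int (S - (c - m)) = int S - (int c - int m)" using Sge cm2 by (simp add: of_nat_diff)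
        show ?thesis by (simp only: of_nat_add of_nat_mult of_nat_numeral hm1 h2)
      qed
      finally have iV: "int (sum dg V) \<le> int D + int m * int D + int S - (int c - int m) + 2 + (int m - 1) * int c" .
      have "int D + int m * int D + int S - (int c - int m) + 2 + (int m - 1) * int c + 2 < 2 * (int n)^2"
        by (rule ar2[where D="int D" and m="int m" and t="int D - int m" and n="int n" and S="int S" and c="int c"]) (use iDm m2 cm2 cD iS in auto)
      thus False using int_contra[OF le iV] by blast
    qed
  next
    case False
    hence cm: "c \<le> m" by simp
    have "sum ex Hi \<le> S" unfolding S_def using sHi[OF exHi] by simp
    hence nb: "sum dg V \<le> D + m * D + S + 2 + (m - 1) * c"
      using sumV' sA1 sA2 cardK sBp by linarith
    have "int (sum dg V) \<le> int (D + m * D + S + 2 + (m - 1) * c)" using nb by (simp only: of_nat_le_iff)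
    also have "\<dots> = int D + int m * int D + int S + 2 + (int m - 1) * int c" by (simp only: of_nat_add of_nat_mult of_nat_numeral hm1)
    finally have iV: "int (sum dg V) \<le> int D + int m * int D + int S + 2 + (int m - 1) * int c" .
    show False
    proof (cases "D = 4 \<and> m = 2")
      case False
      have "int D + int m * int D + int S + 2 + (int m - 1) * int c + 2 < 2 * (int n)^2"
        by (rule ar3[where D="int D" and m="int m" and t="int D - int m" and n="int n" and S="int S" and c="int c"]) (use iDm m2 tD cm iS False in auto)
      thus False using int_contra[OF le iV] by blast
    next
      case True
      hence D4: "D = 4" and m2': "m = 2" by auto
      have n3': "n = 3" using Dm D4 m2' by simp
      have Hi0: "Hi = {}" using dA D4 m2' unfolding Hi_def by fastforce
      have dA3: "dg a \<le> 3" if "a \<in> A" for a using dA[OF that] D4 by simp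
      have le18: "18 \<le> sum dg V + 2" using le n3' by (simp add: power2_eq_square)
      have sBp2: "sum dg Bp \<le> c" using sBp m2' by simp
      obtain a where a: "a \<in> A" "dg a = 2"
      proof (rule ccontr)
        assume "\<not> thesis"
        hence n2: "\<forall>a\<in>A. dg a \<noteq> 2" using that by blast
        have "sum dg A \<le> sum (\<lambda>a. 1 + (if a \<in> K then 2 else 0)) A"
        proof (rule sum_mono)
          fix a assume a: "a \<in> A"
          show "dg a \<le> 1 + (if a \<in> K then 2 else 0)" using dA3[OF a] n2 a m2' unfolding K_def by auto
        qed
        also have "\<dots> = card A + 2 * card K"
        proof -
          have "A \<inter> K = K" unfolding K_def by auto
          hence "(\<Sum>a\<in>A. (if a \<in> K then 2 else 0)) = 2 * card K" using finA by (simp add: sum.If_cases)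
          moreover have "(\<Sum>a\<in>A. (1::nat) + (if a \<in> K then 2 else 0)) = (\<Sum>a\<in>A. 1) + (\<Sum>a\<in>A. (if a \<in> K then 2 else 0))"
            by (rule sum.distrib)
          ultimately show ?thesis by simp
        qed
        finally have "sum dg A \<le> 8" using cardA D4 cardK by simp
        thus False using le18 sumV' sBp2 cm m2' D4 by linarith
      qed
      have "sum dg A \<le> sum (\<lambda>a. 2 + (if a \<in> K then 1 else 0)) A"
      proof (rule sum_mono)
        fix a assume a: "a \<in> A"
        show "dg a \<le> 2 + (if a \<in> K then 1 else 0)" using dA3[OF a] a m2' unfolding K_def by auto
      qed
      also have "\<dots> = 2 * card A + card K"
      proof -
        have "A \<inter> K = K" unfolding K_def by auto
        hence "(\<Sum>a\<in>A. (if a \<in> K then 1 else 0)) = card K" using finA by (simp add: sum.If_cases)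
        moreover have "(\<Sum>a\<in>A. (2::nat) + (if a \<in> K then 1 else 0)) = (\<Sum>a\<in>A. 2) + (\<Sum>a\<in>A. (if a \<in> K then 1 else 0))"
          by (rule sum.distrib)
        ultimately show ?thesis by simp
      qed
      finally have "sum dg A \<le> 10" using cardA D4 cardK by simp
      hence c2: "c = 2" using le18 sumV' sBp2 cm m2' D4 by linarith
      have cnt: "2 \<le> card (nb qs \<inter> A)" using nbqs c2 m2' by linarith
      thus False using C3[OF cnt a(1)] a(2) c2 by simp
    qed
  qed
qed

end

context pg
begin

lemma main: "graph_iso V E (Kbip_verts (n - 1) (n + 1)) (Kbip_edges (n - 1) (n + 1))"
proof -
  have "V \<noteq> {}" using cardV n3 by auto
  hence "Max (dg ` V) \<in> dg ` V" using finV by simp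
  then obtain x where xV: "x \<in> V" and xM: "dg x = Max (dg ` V)" by auto
  have xmax: "\<forall>v\<in>V. dg v \<le> dg x" using xM finV by simp
  interpret P: pgx V E n x by unfold_locales (use xV xmax in auto)
  show ?thesis
  proof (cases "\<forall>a\<in>P.A. \<forall>b\<in>P.A. {a,b} \<notin> E")
    case True
    thus ?thesis using P.S1 by blast
  next
    case False
    then obtain a0 b0 where ab: "a0 \<in> P.A" "b0 \<in> P.A" "{a0,b0} \<in> E" by blast
    show ?thesis
    proof (cases "\<exists>q\<in>P.Bp. dg q = dg x")
      case True
      then obtain q where "q \<in> P.Bp" "dg q = dg x" by blast
      thus ?thesis using P.S2 ab by blast
    next
      case False
      hence noB: "\<forall>q\<in>P.Bp. dg q \<noteq> dg x" by blast
      show ?thesis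
      proof (cases "dg x = n")
        case True
        thus ?thesis using P.S3 noB ab by blast
      next
        case False
        hence "dg x \<ge> n + 1" using P.S0 by simp
        thus ?thesis using P.S5 noB by blast
      qed
    qed
  qed
qed

end

theorem theorem1p5:
  fixes n :: nat and V :: "'a set" and E :: "'a set set"
  assumes "n \<ge> 3"
    and "simple_graph V E"
    and "card V = 2 * n"
    and "card E \<ge> n^2 - 1"
    and "\<forall>a\<in>V. \<forall>b\<in>V. a \<noteq> b \<and> degree E a = degree E b \<longrightarrow> \<not> path3 E a b"
  shows "graph_iso V E (Kbip_verts (n - 1) (n + 1)) (Kbip_edges (n - 1) (n + 1))"
proof -
  interpret pg V E n by unfold_locales (use assms in auto)
  show ?thesis by (rule main)
qed

end
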